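(* Let $X=[X_1|X_2]$ be a real $n\times p$ matrix with $X_1$ of size $n\times p_1$ and $X_2$ of size $n\times p_2$, where $X_1$ has linearly independent columns ($\mathrm{rank}(X_1)=p_1\le n$). Let $X_2=[X_{2,1}|\cdots|X_{2,B}]$ be split into blocks, let $\lambda_1,\dots,\lambda_B>0$ and let $\Lambda$ be the $p_2\times p_2$ diagonal matrix whose diagonal entries corresponding to the columns of $X_{2,b}$ equal $\lambda_b$. Let $\Lambda'=\begin{pmatrix}\mathbf{0}_{p_1\times p_1}&\mathbf{0}_{p_1\times p_2}\\ \mathbf{0}_{p_2\times p_1}&\Lambda\end{pmatrix}$. Let $W$ be an $n\times n$ diagonal matrix with strictly positive diagonal entries, set $X_{k,W}=W^{1/2}X_k$ for $k=1,2$, $P_{1,W}=I_{n\times n}-X_{1,W}(X_{1,W}^TX_{1,W})^{-1}X_{1,W}^T$, $\Sigma_{2,b}=X_{2,b}X_{2,b}^T$, and $$\Gamma_{W,\Lambda}=W^{1/2}\Bigl(\sum_{b=1}^B\lambda_b^{-1}\Sigma_{2,b}\Bigr)W^{1/2}.$$ Let $H_{W,\Lambda}=X(X^TWX+\Lambda')^{-1}X^T$. Then $$H_{W,\Lambda}=W^{-1/2}X_{1,W}(X_{1,W}^TX_{1,W})^{-1}X_{1,W}^T\bigl(I_{n\times n}-W^{1/2}H_{2,W,\Lambda}W^{1/2}\bigr)W^{-1/2}+H_{2,W,\Lambda},$$ where $$H_{2,W,\Lambda}=W^{-1/2}\,\Gamma_{W,\Lambda}\Bigl(I_{n\times n}-(I_{n\times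 n}+P_{1,W}\Gamma_{W,\Lambda})^{-1}P_{1,W}\Gamma_{W,\Lambda}\Bigr)P_{1,W}\,W^{-1/2}.$$
   Context: $X_1$ contains unpenalized covariates and $X_2$ contains penalized covariates in multi-penalty ridge regression; $H_{W,\Lambda}$ is the sample-weighted hat matrix used in iterative weighted least squares. *)

theory Defs
  imports "HOL-Analysis.Analysis"
begin

definition hcat :: "real^'k^'m \<Rightarrow> real^'l^'m \<Rightarrow> real^('k + 'l)^'m" where
  "hcat A B = (\<chi> i j. case j of Inl a \<Rightarrow> A $ i $ a | Inr b \<Rightarrow> B $ i $ b)"

definition bdiag :: "real^'k^'k \<Rightarrow> real^'l^'l \<Rightarrow> real^('k + 'l)^('k + 'l)" where
  "bdiag A B = (\<chi> i j. case (i, j) of (Inl a, Inl a') \<Rightarrow> A $ a $ a'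
                                | (Inr b, Inr b') \<Rightarrow> B $ b $ b'
                                | _ \<Rightarrow> 0)"

definition diag_mat :: "('n \<Rightarrow> real) \<Rightarrow> real^'n^'n" where
  "diag_mat d = (\<chi> i j. if i = j then d i else 0)"

definition is_diag :: "real^'n^'n \<Rightarrow> bool" where
  "is_diag A \<longleftrightarrow> (\<forall>i j. i \<noteq> j \<longrightarrow> A $ i $ j = 0)"

definition diag_sqrt :: "real^'n^'n \<Rightarrow> real^'n^'n" where
  "diag_sqrt W = diag_mat (\<lambda>i. sqrt (W $ i $ i))"

text \<open>Sigma_{2,b} = X_{2,b} X_{2,b}^T, where X_{2,b} consists of the columns j of X2 with blk j = b.\<close>
definition Sigma_blk :: "real^'p^'n \<Rightarrow> ('p \<Rightarrow> 'b) \<Rightarrow> 'b \<Rightarrow> real^'n^'n" where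
  "Sigma_blk X2 blk b = (\<chi> i k. \<Sum>j\<in>{j. blk j = b}. X2 $ i $ j * X2 $ k $ j)"

definition diag_msqrt :: "real^'n^'n \<Rightarrow> real^'n^'n" where
  "diag_msqrt W = matrix_inv (diag_sqrt W)"

definition P1W :: "real^'p1^'n \<Rightarrow> real^'n^'n \<Rightarrow> real^'n^'n" where
  "P1W X1 W = (let X1W = diag_sqrt W ** X1 in
      mat 1 - X1W ** matrix_inv (transpose X1W ** X1W) ** transpose X1W)"

definition GammaW :: "real^'p2^'n \<Rightarrow> ('p2 \<Rightarrow> 'b::finite) \<Rightarrow> ('b \<Rightarrow> real) \<Rightarrow> real^'n^'n \<Rightarrow> real^'n^'n" where
  "GammaW X2 blk lam W =
     diag_sqrt W ** (\<Sum>b\<in>UNIV. (1 / lam b) *\<^sub>R Sigma_blk X2 blk b) ** diag_sqrt W"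

definition H2W :: "real^'p1^'n \<Rightarrow> real^'p2^'n \<Rightarrow> ('p2 \<Rightarrow> 'b::finite) \<Rightarrow> ('b \<Rightarrow> real) \<Rightarrow> real^'n^'n \<Rightarrow> real^'n^'n" where
  "H2W X1 X2 blk lam W = (let P = P1W X1 W; G = GammaW X2 blk lam W in
     diag_msqrt W ** G ** (mat 1 - matrix_inv (mat 1 + P ** G) ** P ** G) ** P ** diag_msqrt W)"

definition HW :: "real^'p1^'n \<Rightarrow> real^'p2^'n \<Rightarrow> ('p2 \<Rightarrow> 'b::finite) \<Rightarrow> ('b \<Rightarrow> real) \<Rightarrow> real^'n^'n \<Rightarrow> real^'n^'n" where
  "HW X1 X2 blk lam W = (let X = hcat X1 X2; Lam' = bdiag (mat 0) (diag_mat (\<lambda>j. lam (blk j))) in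
     X ** matrix_inv (transpose X ** W ** X + Lam') ** transpose X)"

end

theory Submission
  imports Defs
begin

lemma mm_add_r: "((A::real^'n^'m) + B) ** C = A ** C + B ** C"
  by (simp add: matrix_matrix_mult_def vec_eq_iff sum.distrib algebra_simps)
lemma mm_sub_r: "((A::real^'n^'m) - B) ** C = A ** C - B ** C"
  by (simp add: matrix_matrix_mult_def vec_eq_iff sum_subtractf algebra_simps)
lemma mm_sub_l: "(A::real^'n^'m) ** (B - C) = A ** B - A ** C"
  by (simp add: matrix_matrix_mult_def vec_eq_iff sum_subtractf algebra_simps)

lemma transpose_add': "transpose ((A::real^'n^'m) + B) = transpose A + transpose B"
  by (simp add: transpose_def vec_eq_iff)
lemma minv_right: "invertible (A::real^'n^'m) \<Longrightarrow> A ** matrix_inv A = mat 1"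
  unfolding invertible_def matrix_inv_def by (rule someI2_ex) auto
lemma minv_left: "invertible (A::real^'n^'m) \<Longrightarrow> matrix_inv A ** A = mat 1"
  unfolding invertible_def matrix_inv_def by (rule someI2_ex) auto

lemma core:
  fixes A :: "real^'p1^'n" and B :: "real^'p2^'n"
    and J1 :: "real^'q^'p1" and J2 :: "real^'q^'p2"
    and L Li :: "real^'p2^'p2"
  assumes J11: "J1 ** transpose J1 = mat 1" and J22: "J2 ** transpose J2 = mat 1"
    and J12: "J1 ** transpose J2 = 0" and J21: "J2 ** transpose J1 = 0"
    and LLi: "L ** Li = mat 1"
    and XW: "XW = A ** J1 + B ** J2"
    and M: "M = transpose XW ** XW + transpose J2 ** L ** J2"
    and Minv: "invertible M"
    and C: "C = transpose A ** A" and Cinv: "invertible C"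
    and Q: "Q = A ** matrix_inv C ** transpose A"
    and P: "P = mat 1 - Q"
    and G: "G = B ** Li ** transpose B"
    and PGinv: "invertible (mat 1 + P ** G)"
    and K: "K = matrix_inv (mat 1 + P ** G)"
    and Y: "Y = G ** K ** P"
  shows "XW ** matrix_inv M ** transpose XW = Q ** (mat 1 - Y) + Y"
proof -
  define Ci where "Ci = matrix_inv C"
  have CCi: "C ** Ci = mat 1" and CiC: "Ci ** C = mat 1"
    using Cinv minv_left minv_right Ci_def by auto
  have K1: "(mat 1 + P ** G) ** K = mat 1" using PGinv K minv_right by auto
  have IY: "mat 1 - P ** G ** K = K"
  proof -
    have "K + P ** G ** K = mat 1" using K1 by (simp add: mm_add_r)
    then show ?thesis by (metis add_diff_cancel_right')
  qed
  define Z1 where "Z1 = Ci ** transpose A ** (mat 1 - Y)"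
  define Z2 where "Z2 = Li ** transpose B ** P ** (mat 1 - Y)"
  define Z where "Z = transpose J1 ** Z1 + transpose J2 ** Z2"
  have BZ2: "B ** Z2 = Y"
  proof -
    have "B ** Z2 = G ** P ** (mat 1 - Y)" by (simp add: Z2_def G matrix_mul_assoc)
    also have "\<dots> = G ** P - G ** P ** G ** K ** P"
      by (simp add: mm_sub_l Y matrix_mul_assoc)
    also have "\<dots> = G ** (mat 1 - P ** G ** K) ** P"
      by (simp add: mm_sub_l mm_sub_r matrix_mul_assoc)
    also have "\<dots> = Y" using IY Y by simp
    finally show ?thesis .
  qed
  have AZ1: "A ** Z1 = Q ** (mat 1 - Y)" by (simp add: Z1_def Q Ci_def matrix_mul_assoc)
  have r1: "X ** J1 ** transpose J1 = X" "X ** J1 ** transpose J2 = 0" for X :: "real^'p1^'n"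
    by (simp_all add: J11 J22 J12 J21 flip: matrix_mul_assoc)
  have r2: "X ** J2 ** transpose J2 = X" "X ** J2 ** transpose J1 = 0" for X :: "real^'p2^'n"
    by (simp_all add: J11 J22 J12 J21 flip: matrix_mul_assoc)
  have XZ0: "XW ** Z = A ** Z1 + B ** Z2"
    by (simp add: XW Z_def matrix_add_ldistrib mm_add_r matrix_mul_assoc r1 r2)
  have XZ: "XW ** Z = Q ** (mat 1 - Y) + Y"
    unfolding XZ0 AZ1 BZ2 ..
  have J2Z: "J2 ** Z = Z2"
    by (simp add: Z_def matrix_add_ldistrib matrix_mul_assoc J22 J21)
  have tAQ: "transpose A ** Q = transpose A"
  proof -
    have "transpose A ** Q = (transpose A ** A) ** Ci ** transpose A"
      by (simp add: Q Ci_def matrix_mul_assoc)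
    also have "\<dots> = transpose A" using CCi C by simp
    finally show ?thesis .
  qed
  have tAH: "transpose A ** (Q ** (mat 1 - Y) + Y) = transpose A"
    by (simp add: matrix_add_ldistrib matrix_mul_assoc tAQ mm_sub_l)
  have tBH: "transpose B ** (Q ** (mat 1 - Y) + Y) + L ** Z2 = transpose B"
  proof -
    have "L ** Z2 = transpose B ** P ** (mat 1 - Y)"
      by (simp add: Z2_def matrix_mul_assoc LLi)
    then have "transpose B ** (Q ** (mat 1 - Y) + Y) + L ** Z2
       = transpose B ** ((Q + P) ** (mat 1 - Y) + Y)"
      by (simp add: matrix_add_ldistrib mm_add_r matrix_mul_assoc)
    also have "\<dots> = transpose B" by (simp add: P mm_sub_l)
    finally show ?thesis .
  qed
  have MZ: "M ** Z = transpose XW"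
  proof -
    have "M ** Z = transpose XW ** (XW ** Z) + transpose J2 ** L ** (J2 ** Z)"
      by (simp add: M mm_add_r matrix_mul_assoc)
    also have "\<dots> = transpose J1 ** (transpose A ** (Q ** (mat 1 - Y) + Y))
        + transpose J2 ** (transpose B ** (Q ** (mat 1 - Y) + Y) + L ** Z2)"
      unfolding XZ J2Z unfolding XW by (simp add: transpose_add' matrix_transpose_mul mm_add_r matrix_add_ldistrib matrix_mul_assoc add.assoc)
    also have "\<dots> = transpose XW"
      by (simp add: tAH tBH XW matrix_transpose_mul transpose_add')
    finally show ?thesis .
  qed
  have "Z = matrix_inv M ** transpose XW"
    using MZ minv_left[OF Minv] by (metis matrix_mul_assoc matrix_mul_lid)
  then show ?thesis using XZ by (simp add: matrix_mul_assoc)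
qed


lemma inner_tr: "(transpose (A::real^'n^'m) *v x) \<bullet> y = x \<bullet> (A *v y)"
  by (simp add: dot_lmul_matrix)
lemma inj0_inv: "(\<And>x. (A::real^'n^'n) *v x = 0 \<Longrightarrow> x = 0) \<Longrightarrow> invertible A"
  using matrix_left_invertible_ker invertible_left_inverse by metis
lemma diag_mat_mult: "diag_mat f ** diag_mat g = diag_mat (\<lambda>i. f i * g i)"
  unfolding diag_mat_def matrix_matrix_mult_def vec_eq_iff
  by (simp add: if_distrib[of "\<lambda>x. x * _"] sum.delta' cong del: if_weak_cong)
lemma diag_mat_tr: "transpose (diag_mat f) = diag_mat f"
  by (simp add: diag_mat_def transpose_def vec_eq_iff)
lemma diag_quad: "u \<bullet> (diag_mat f *v u) = (\<Sum>i\<in>UNIV. f i * (u$i)^2)"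
  unfolding diag_mat_def matrix_vector_mult_def inner_vec_def
  by (simp add: if_distrib[of "\<lambda>x. _ * x"] sum.delta power2_eq_square algebra_simps cong del: if_weak_cong)
lemma diag_quad_nonneg: "(\<And>i. f i > 0) \<Longrightarrow> u \<bullet> (diag_mat f *v u) \<ge> 0"
  unfolding diag_quad by (intro sum_nonneg) (simp add: less_imp_le)
lemma diag_quad_zero: "(\<And>i. f i > 0) \<Longrightarrow> u \<bullet> (diag_mat f *v u) = 0 \<Longrightarrow> u = 0"
  unfolding diag_quad
  by (subst (asm) sum_nonneg_eq_0_iff) (auto simp: vec_eq_iff less_imp_le, metis less_irrefl)
lemma sum_UNIV_Plus: "(\<Sum>j\<in>(UNIV::('a::finite + 'b::finite) set). f j) = (\<Sum>a\<in>UNIV. f (Inl a)) + (\<Sum>b\<in>UNIV. f (Inr b))"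
  by (subst UNIV_Plus_UNIV[symmetric], subst sum.Plus) (simp_all add: comp_def)

lemma delta2: "(\<Sum>b\<in>(UNIV::'a::finite set). (if b = i then 1 else 0) * (if b = j then (1::real) else 0)) = (if i = j then 1 else 0)"
  by (cases "i = j") (simp_all add: if_distrib[of "\<lambda>x. x * _"] cong del: if_weak_cong)
lemma delta2': "(\<Sum>b\<in>(UNIV::'a::finite set). (if i = b then 1 else 0) * (if j = b then (1::real) else 0)) = (if i = j then 1 else 0)"
  by (cases "i = j") (simp_all add: if_distrib[of "\<lambda>x. x * _"] cong del: if_weak_cong)

definition J1 :: "real^('p1::finite+'p2::finite)^'p1" where "J1 = (\<chi> a j. if j = Inl a then 1 else 0)"
definition J2 :: "real^('p1::finite+'p2::finite)^'p2" where "J2 = (\<chi> a j. if j = Inr a then 1 else 0)"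

lemma J11: "(J1::real^('p1::finite+'p2::finite)^'p1) ** transpose J1 = mat 1"
  unfolding J1_def matrix_matrix_mult_def transpose_def mat_def vec_eq_iff
  by (simp add: sum_UNIV_Plus delta2 cong del: if_weak_cong)
lemma J22: "(J2::real^('p1::finite+'p2::finite)^'p2) ** transpose J2 = mat 1"
  unfolding J2_def matrix_matrix_mult_def transpose_def mat_def vec_eq_iff
  by (simp add: sum_UNIV_Plus delta2 cong del: if_weak_cong)
lemma J12: "(J1::real^('p1::finite+'p2::finite)^'p1) ** transpose (J2::real^('p1::finite+'p2::finite)^'p2) = 0"
  unfolding J1_def J2_def matrix_matrix_mult_def transpose_def vec_eq_iff
  by (simp add: sum_UNIV_Plus)
lemma J21: "(J2::real^('p1::finite+'p2::finite)^'p2) ** transpose (J1::real^('p1::finite+'p2::finite)^'p1) = 0"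
  unfolding J1_def J2_def matrix_matrix_mult_def transpose_def vec_eq_iff
  by (simp add: sum_UNIV_Plus)
lemma Jsum: "transpose (J1::real^('p1::finite+'p2::finite)^'p1) ** J1 + transpose (J2::real^('p1::finite+'p2::finite)^'p2) ** J2 = mat 1"
  unfolding J1_def J2_def matrix_matrix_mult_def transpose_def mat_def vec_eq_iff
  apply (intro allI)
  subgoal for i j by (cases i; cases j) (simp_all add: delta2' cong del: if_weak_cong)
  done
lemma hcat_J: "hcat X1 X2 = X1 ** J1 + X2 ** J2"
  unfolding hcat_def J1_def J2_def matrix_matrix_mult_def vec_eq_iff
  apply (intro allI)
  subgoal for i j by (cases j) (simp_all add: if_distrib[of "\<lambda>x. _ * x"] sum.delta cong del: if_weak_cong)
  done
lemma bdiag_J: "bdiag (mat 0) (diag_mat f) = transpose J2 ** diag_mat f ** J2"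
  unfolding bdiag_def J2_def matrix_matrix_mult_def transpose_def diag_mat_def vec_eq_iff
  apply (intro allI)
  subgoal for i j by (cases i; cases j) (simp_all add: if_distrib[of "\<lambda>x. _ * x"] if_distrib[of "\<lambda>x. x * _"] sum.delta sum.delta' cong del: if_weak_cong)
  done

lemma transpose_sub': "transpose ((A::real^'n^'m) - B) = transpose A - transpose B"
  by (simp add: transpose_def vec_eq_iff)

lemma mv_neg: "(A::real^'n^'m) *v (- x) = - (A *v x)"
  by (simp add: matrix_vector_mult_def vec_eq_iff sum_negf)

lemma inner_tr2: "v \<bullet> (transpose (Z::real^'n^'m) *v u) = (Z *v v) \<bullet> u"
  by (metis inner_tr transpose_transpose)

lemma diag_mat_one: "diag_mat (\<lambda>i. 1) = mat 1"
  by (simp add: diag_mat_def mat_def)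

lemma sum_Sigma:
  fixes X2 :: "real^'p2^'n" and blk :: "'p2 \<Rightarrow> 'b::finite"
  shows "(\<Sum>b\<in>UNIV. (1 / lam b) *\<^sub>R Sigma_blk X2 blk b)
   = X2 ** diag_mat (\<lambda>j. 1 / lam (blk j)) ** transpose X2"
proof -
  have "(\<Sum>b\<in>UNIV. (1 / lam b) *\<^sub>R Sigma_blk X2 blk b) $ i $ k
      = (X2 ** diag_mat (\<lambda>j. 1 / lam (blk j)) ** transpose X2) $ i $ k" for i k
  proof -
    have "(\<Sum>b\<in>UNIV. (1 / lam b) *\<^sub>R Sigma_blk X2 blk b) $ i $ k
        = (\<Sum>b\<in>UNIV. \<Sum>j\<in>{j\<in>UNIV. blk j = b}. (1 / lam (blk j)) * (X2 $ i $ j * X2 $ k $ j))"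
      by (simp add: Sigma_blk_def sum_distrib_left)
    also have "\<dots> = (\<Sum>j\<in>UNIV. (1 / lam (blk j)) * (X2 $ i $ j * X2 $ k $ j))"
      by (rule sum.group) auto
    also have "\<dots> = (X2 ** diag_mat (\<lambda>j. 1 / lam (blk j)) ** transpose X2) $ i $ k"
      unfolding matrix_matrix_mult_def diag_mat_def transpose_def
      by (simp add: if_distrib[of "\<lambda>x. _ * x"] sum.delta' algebra_simps cong del: if_weak_cong)
    finally show ?thesis .
  qed
  then show ?thesis by (simp add: vec_eq_iff)
qed


theorem proposition1:
  fixes X1 :: "real^'p1^'n" and X2 :: "real^'p2^'n"
    and blk :: "'p2 \<Rightarrow> 'b::finite" and lam :: "'b \<Rightarrow> real"
    and W :: "real^'n^'n"
  assumes rankX1: "rank X1 = CARD('p1)"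
    and lam_pos: "\<forall>b. lam b > 0"
    and W_diag: "is_diag W" and W_pos: "\<forall>i. W $ i $ i > 0"
  shows "HW X1 X2 blk lam W =
           diag_msqrt W ** (diag_sqrt W ** X1)
             ** matrix_inv (transpose (diag_sqrt W ** X1) ** (diag_sqrt W ** X1))
             ** transpose (diag_sqrt W ** X1)
             ** (mat 1 - diag_sqrt W ** H2W X1 X2 blk lam W ** diag_sqrt W) ** diag_msqrt W
           + H2W X1 X2 blk lam W"
proof -
  define D where "D = diag_sqrt W"
  define Dv where "Dv = diag_mat (\<lambda>i. 1 / sqrt (W$i$i))"
  have Dd: "D = diag_mat (\<lambda>i. sqrt (W$i$i))" by (simp add: D_def diag_sqrt_def)
  have Wnz: "W$i$i \<noteq> 0" for i using W_pos by (metis less_irrefl)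
  have DDv: "D ** Dv = mat 1" and DvD: "Dv ** D = mat 1"
    using W_pos Wnz by (simp_all add: Dd Dv_def diag_mat_mult diag_mat_one[symmetric])
  have DvI: "diag_msqrt W = Dv"
  proof -
    have inv: "invertible D" unfolding invertible_def using DDv DvD by blast
    have "Dv ** (D ** matrix_inv D) = Dv" using minv_right[OF inv] by simp
    then show ?thesis by (simp add: diag_msqrt_def D_def[symmetric] matrix_mul_assoc DvD)
  qed
  have WDD: "W = D ** D"
  proof -
    have "D ** D = diag_mat (\<lambda>i. W$i$i)"
      using W_pos by (simp add: Dd diag_mat_mult less_imp_le)
    also have "\<dots> = W" using W_diag by (auto simp: diag_mat_def is_diag_def vec_eq_iff)
    finally show ?thesis by simp
  qed
  have tD: "transpose D = D" and tDv: "transpose Dv = Dv"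
    by (simp_all add: Dd Dv_def diag_mat_tr)
  define A where "A = D ** X1"
  define B where "B = D ** X2"
  have Ainj: "A *v x = 0 \<Longrightarrow> x = 0" for x
  proof -
    assume "A *v x = 0"
    then have "Dv *v (D *v (X1 *v x)) = 0" by (simp add: A_def matrix_vector_mul_assoc)
    moreover have "Dv ** (D ** X1) = X1" by (simp add: matrix_mul_assoc DvD)
    ultimately have "X1 *v x = X1 *v 0" by (metis matrix_vector_mul_assoc matrix_vector_mult_0_right)
    moreover have "inj ((*v) X1)" using rankX1 full_rank_injective by blast
    ultimately show "x = 0" by (meson injD)
  qed
  define C where "C = transpose A ** A"
  have Cinv: "invertible C"
  proof (rule inj0_inv)
    fix x assume "C *v x = 0"
    then have "x \<bullet> (transpose A *v (A *v x)) = 0" by (simp add: C_def matrix_vector_mul_assoc)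
    then have "(A *v x) \<bullet> (A *v x) = 0" by (metis inner_tr transpose_transpose)
    then show "x = 0" using Ainj by simp
  qed
  define Ci where "Ci = matrix_inv C"
  have CCi: "C ** Ci = mat 1" and CiC: "Ci ** C = mat 1"
    using Cinv minv_left minv_right Ci_def by auto
  have tC: "transpose C = C" by (simp add: C_def matrix_transpose_mul)
  have tCi: "transpose Ci = Ci"
  proof -
    have "transpose Ci ** C = mat 1"
      by (metis CCi matrix_transpose_mul tC transpose_mat)
    then have "transpose Ci ** C ** Ci = Ci" by simp
    then show ?thesis by (simp add: CCi flip: matrix_mul_assoc)
  qed
  define Q where "Q = A ** Ci ** transpose A"
  define P where "P = mat 1 - Q"
  have P1: "P1W X1 W = P"
    by (simp add: P1W_def Let_def P_def Q_def Ci_def C_def A_def D_def)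
  have tQ: "transpose Q = Q"
    by (simp add: Q_def matrix_transpose_mul tCi matrix_mul_assoc)
  have tP: "transpose P = P"
    by (simp add: P_def tQ transpose_sub')
  have QQ: "Q ** Q = Q"
  proof -
    have "Q ** Q = A ** Ci ** (transpose A ** A) ** Ci ** transpose A"
      by (simp add: Q_def matrix_mul_assoc)
    also have "\<dots> = A ** (Ci ** C) ** Ci ** transpose A"
      by (simp add: C_def matrix_mul_assoc)
    also have "\<dots> = Q" by (simp add: CiC Q_def)
    finally show ?thesis .
  qed
  have PP: "P ** P = P"
    by (simp add: P_def mm_sub_l mm_sub_r QQ)
  define L where "L = diag_mat (\<lambda>j. lam (blk j))"
  define Li where "Li = diag_mat (\<lambda>j. 1 / lam (blk j))"
  have lnz: "lam b \<noteq> 0" for b using lam_pos by (metis less_irrefl)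
  have LLi: "L ** Li = mat 1"
    using lam_pos lnz by (simp add: L_def Li_def diag_mat_mult diag_mat_one[symmetric] less_imp_le)
  define G where "G = B ** Li ** transpose B"
  have GG: "GammaW X2 blk lam W = G"
    by (simp add: GammaW_def sum_Sigma G_def B_def D_def[symmetric] Li_def matrix_transpose_mul tD matrix_mul_assoc)
  have Gpsd: "x \<bullet> (G *v x) \<ge> 0" for x
  proof -
    have "x \<bullet> (G *v x) = (transpose B *v x) \<bullet> (Li *v (transpose B *v x))"
      unfolding G_def matrix_vector_mul_assoc[symmetric] inner_tr ..
    also have "\<dots> \<ge> 0" unfolding Li_def using lam_pos by (intro diag_quad_nonneg) simp
    finally show ?thesis .
  qed
  have PGinv: "invertible (mat 1 + P ** G)"
  proof (rule inj0_inv)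
    fix x assume "(mat 1 + P ** G) *v x = 0"
    then have x: "x = - (P *v (G *v x))"
      by (simp add: matrix_vector_mult_add_rdistrib matrix_vector_mul_assoc eq_neg_iff_add_eq_0)
    then have "P *v x = - ((P ** P) *v (G *v x))"
      by (metis matrix_vector_mul_assoc mv_neg)
    then have Px: "P *v x = x" using PP x by simp
    have "x \<bullet> (G *v x) = (transpose P *v x) \<bullet> (G *v x)" using Px tP by simp
    also have "\<dots> = x \<bullet> (P *v (G *v x))" by (rule inner_tr)
    also have "\<dots> = - (x \<bullet> x)" using x by (metis inner_minus_right minus_minus)
    finally have "x \<bullet> x \<le> 0" using Gpsd[of x] by linarith
    then show "x = 0" by (metis inner_eq_zero_iff inner_ge_zero order_antisym)
  qed
  define K where "K = matrix_inv (mat 1 + P ** G)"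
  define Y where "Y = G ** K ** P"
  have KPG: "mat 1 - K ** P ** G = K"
  proof -
    have "K ** (mat 1 + P ** G) = mat 1" using minv_left[OF PGinv] K_def by simp
    then have "K + K ** P ** G = mat 1" by (simp add: matrix_add_ldistrib matrix_mul_assoc)
    then have "mat 1 - K ** P ** G = (K + K ** P ** G) - K ** P ** G" by simp
    then show ?thesis by simp
  qed
  have H2: "H2W X1 X2 blk lam W = Dv ** Y ** Dv"
    by (simp add: H2W_def Let_def P1 GG DvI K_def[symmetric] KPG Y_def matrix_mul_assoc)
  define XW where "XW = A ** J1 + B ** J2"
  define M where "M = transpose XW ** XW + transpose J2 ** L ** J2"
  have Minv: "invertible M"
  proof (rule inj0_inv)
    fix v assume "M *v v = 0"
    then have "v \<bullet> (M *v v) = 0" by simp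
    moreover have "M *v v = transpose XW *v (XW *v v) + transpose J2 *v (L *v (J2 *v v))"
      by (simp only: M_def matrix_vector_mult_add_rdistrib matrix_vector_mul_assoc[symmetric])
    ultimately have "(XW *v v) \<bullet> (XW *v v) + (J2 *v v) \<bullet> (L *v (J2 *v v)) = 0"
      by (simp only: inner_add_right inner_tr2)
    moreover have "(J2 *v v) \<bullet> (L *v (J2 *v v)) \<ge> 0"
      unfolding L_def using lam_pos by (intro diag_quad_nonneg) simp
    moreover have "(XW *v v) \<bullet> (XW *v v) \<ge> 0" by simp
    ultimately have e1: "(XW *v v) \<bullet> (XW *v v) = 0" and e2: "(J2 *v v) \<bullet> (L *v (J2 *v v)) = 0"
      by linarith+
    have J2v: "J2 *v v = 0" using e2 unfolding L_def using lam_pos by (intro diag_quad_zero) simp_all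
    have "XW *v v = 0" using e1 by simp
    then have "A *v (J1 *v v) = 0"
      by (simp add: XW_def matrix_vector_mult_add_rdistrib matrix_vector_mul_assoc[symmetric] J2v)
    then have J1v: "J1 *v v = 0" by (rule Ainj)
    have "v = (transpose J1 ** J1 + transpose J2 ** J2) *v v" by (simp add: Jsum)
    also have "\<dots> = 0"
      by (simp add: matrix_vector_mult_add_rdistrib matrix_vector_mul_assoc[symmetric] J1v J2v)
    finally show "v = 0" .
  qed
  have coreeq: "XW ** matrix_inv M ** transpose XW = Q ** (mat 1 - Y) + Y"
    by (rule core[OF J11 J22 J12 J21 LLi XW_def M_def Minv C_def Cinv Q_def[unfolded Ci_def]
        P_def G_def PGinv K_def Y_def])
  have X: "hcat X1 X2 = Dv ** XW"
    by (simp add: XW_def A_def B_def hcat_J matrix_add_ldistrib matrix_mul_assoc DvD)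
  have canc: "Z ** Dv ** D = Z" "Z ** D ** Dv = Z" for Z :: "real^'n^_"
    by (simp_all add: DvD DDv flip: matrix_mul_assoc)
  have XWX: "transpose (hcat X1 X2) ** W ** hcat X1 X2 + bdiag (mat 0) (diag_mat (\<lambda>j. lam (blk j))) = M"
    unfolding bdiag_J unfolding L_def[symmetric]
    by (simp add: X M_def WDD matrix_transpose_mul tDv matrix_mul_assoc canc)
  have HWe: "HW X1 X2 blk lam W = Dv ** (Q ** (mat 1 - Y) + Y) ** Dv"
  proof -
    have "HW X1 X2 blk lam W = hcat X1 X2 ** matrix_inv M ** transpose (hcat X1 X2)"
      unfolding HW_def Let_def XWX ..
    also have "\<dots> = Dv ** (XW ** matrix_inv M ** transpose XW) ** Dv"
      by (simp add: X matrix_transpose_mul tDv matrix_mul_assoc)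
    finally show ?thesis by (simp add: coreeq)
  qed
  have DYD: "D ** (Dv ** Y ** Dv) ** D = Y"
    by (simp add: matrix_mul_assoc DDv canc)
  show ?thesis
    unfolding H2 D_def[symmetric] A_def[symmetric] DvI C_def[symmetric] Ci_def[symmetric] DYD HWe
    by (simp add: Q_def matrix_add_ldistrib mm_add_r matrix_mul_assoc)
qed

end
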